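(* Let $X$ be an algebraic variety. The assignment $U\mapsto\mathcal{T}(U)$ to every Zariski open $U\subset X$, together with the restriction of functions $\mathcal{T}(V)\to\mathcal{T}(U)$ for Zariski open $U\subset V$, is a sheaf on $X$ (in the Zariski topology).
   Context: An affine algebraic variety is a topological space with a sheaf of real-valued functions isomorphic as a ringed space (via a "closed embedding" $i$) to an algebraic set $Y\subset\mathbb{R}^n$ (common zero locus of real polynomials) with its Zariski topology and sheaf of regular functions. An algebraic variety is a topological space with a sheaf of real-valued functions admitting a finite open cover by affine algebraic varieties; Zariski open subsets of (affine) algebraic varieties are (affine) algebraic varieties. A tempered function on $\mathbb{R}^n$ is a smooth function all of whose partial derivatives are bounded by $C(1+|x|^2)^N$ for some $C,N$. For affine $X$, $\mathcal{T}(X)$ is the space of $f:X\to\mathbb{R}$ such that $f\circ i^{-1}$ is the restriction to $i(X)$ of a tempered function on $\mathbb{R}^n$ (independent of $i$). For a general algebraic variety $X$, $\mathcal{T}(X)$ is the set of $t:X\to\mathbb{R}$ such that $t|_{X_i}\in\mathcal{T}(X_i)$ for every member $X_i$ of some (equivalently every) finite Zariski open cover of $X$ by affine algebraic varieties. *)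

theory Defs
  imports "HOL-Analysis.Analysis" "HOL-Library.FuncSet"
begin

text \<open>R^n is represented inside nat => real as the points whose coordinates
  with index >= n vanish.\<close>
definition euclid :: "nat \<Rightarrow> (nat \<Rightarrow> real) set" where
  "euclid n = {x. \<forall>i\<ge>n. x i = 0}"

inductive_set poly_fun :: "nat \<Rightarrow> ((nat \<Rightarrow> real) \<Rightarrow> real) set" for n :: nat where
  const: "(\<lambda>x. c) \<in> poly_fun n"
| var: "i < n \<Longrightarrow> (\<lambda>x. x i) \<in> poly_fun n"
| add: "p \<in> poly_fun n \<Longrightarrow> q \<in> poly_fun n \<Longrightarrow> (\<lambda>x. p x + q x) \<in> poly_fun n"
| mult: "p \<in> poly_fun n \<Longrightarrow> q \<in> poly_fun n \<Longrightarrow> (\<lambda>x. p x * q x) \<in> poly_fun n"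

definition zariski_closed_in :: "nat \<Rightarrow> (nat \<Rightarrow> real) set \<Rightarrow> (nat \<Rightarrow> real) set \<Rightarrow> bool" where
  "zariski_closed_in n Y Z \<longleftrightarrow> (\<exists>P \<subseteq> poly_fun n. Z = {y \<in> Y. \<forall>p\<in>P. p y = 0})"

definition zariski_open_in :: "nat \<Rightarrow> (nat \<Rightarrow> real) set \<Rightarrow> (nat \<Rightarrow> real) set \<Rightarrow> bool" where
  "zariski_open_in n Y U \<longleftrightarrow> U \<subseteq> Y \<and> zariski_closed_in n Y (Y - U)"

definition algebraic_set :: "nat \<Rightarrow> (nat \<Rightarrow> real) set \<Rightarrow> bool" where
  "algebraic_set n Y \<longleftrightarrow> zariski_closed_in n (euclid n) Y"

definition regular_on :: "nat \<Rightarrow> (nat \<Rightarrow> real) set \<Rightarrow> (nat \<Rightarrow> real) set \<Rightarrow> ((nat \<Rightarrow> real) \<Rightarrow> real) \<Rightarrow> bool" where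
  "regular_on n Y W f \<longleftrightarrow>
     (\<forall>x\<in>W. \<exists>N. zariski_open_in n Y N \<and> x \<in> N \<and> N \<subseteq> W \<and>
        (\<exists>p\<in>poly_fun n. \<exists>q\<in>poly_fun n. \<forall>y\<in>N. q y \<noteq> 0 \<and> f y = p y / q y))"

definition sheaf_fun :: "'a topology \<Rightarrow> ('a set \<Rightarrow> ('a \<Rightarrow> real) set) \<Rightarrow> bool" where
  "sheaf_fun X F \<longleftrightarrow>
     (\<forall>U. openin X U \<longrightarrow> F U \<subseteq> extensional U) \<and>
     (\<forall>U V f. openin X U \<and> openin X V \<and> U \<subseteq> V \<and> f \<in> F V \<longrightarrow> restrict f U \<in> F U) \<and>
     (\<forall>V \<U> f g. openin X V \<and> (\<forall>U\<in>\<U>. openin X U) \<and> \<Union>\<U> = V \<and> f \<in> F V \<and> g \<in> F V \<and>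
        (\<forall>U\<in>\<U>. restrict f U = restrict g U) \<longrightarrow> f = g) \<and>
     (\<forall>V \<U> s. openin X V \<and> (\<forall>U\<in>\<U>. openin X U) \<and> \<Union>\<U> = V \<and> (\<forall>U\<in>\<U>. s U \<in> F U) \<and>
        (\<forall>U\<in>\<U>. \<forall>U'\<in>\<U>. restrict (s U) (U \<inter> U') = restrict (s U') (U \<inter> U')) \<longrightarrow>
        (\<exists>f\<in>F V. \<forall>U\<in>\<U>. restrict f U = s U))"

text \<open>i is an isomorphism of ringed spaces from (X, OX) onto the algebraic set Y in R^n
  with its Zariski topology and sheaf of regular functions.\<close>
definition affine_embedding :: "'a topology \<Rightarrow> ('a set \<Rightarrow> ('a \<Rightarrow> real) set) \<Rightarrow> nat \<Rightarrow> (nat \<Rightarrow> real) set \<Rightarrow> ('a \<Rightarrow> (nat \<Rightarrow> real)) \<Rightarrow> bool" where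
  "affine_embedding X OX n Y i \<longleftrightarrow>
     algebraic_set n Y \<and> bij_betw i (topspace X) Y \<and>
     (\<forall>W. W \<subseteq> topspace X \<longrightarrow> (openin X W \<longleftrightarrow> zariski_open_in n Y (i ` W))) \<and>
     (\<forall>W f. openin X W \<longrightarrow>
        (f \<in> OX W \<longleftrightarrow> f \<in> extensional W \<and> regular_on n Y (i ` W) (\<lambda>y. f (inv_into (topspace X) i y))))"

definition affine_variety :: "'a topology \<Rightarrow> ('a set \<Rightarrow> ('a \<Rightarrow> real) set) \<Rightarrow> bool" where
  "affine_variety X OX \<longleftrightarrow> (\<exists>n Y i. affine_embedding X OX n Y i)"

text \<open>Restriction to an open U: the subspace topology, with the same sheaf (queried only on opens inside U).\<close>
definition algebraic_variety :: "'a topology \<Rightarrow> ('a set \<Rightarrow> ('a \<Rightarrow> real) set) \<Rightarrow> bool" where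
  "algebraic_variety X OX \<longleftrightarrow> sheaf_fun X OX \<and>
     (\<exists>\<U>. finite \<U> \<and> \<Union>\<U> = topspace X \<and>
        (\<forall>U\<in>\<U>. openin X U \<and> affine_variety (subtopology X U) OX))"

definition sqnorm :: "nat \<Rightarrow> (nat \<Rightarrow> real) \<Rightarrow> real" where
  "sqnorm n x = (\<Sum>i<n. (x i)\<^sup>2)"

definition cont_on_euclid :: "nat \<Rightarrow> ((nat \<Rightarrow> real) \<Rightarrow> real) \<Rightarrow> bool" where
  "cont_on_euclid n g \<longleftrightarrow>
     (\<forall>x\<in>euclid n. \<forall>e>0. \<exists>d>0. \<forall>y\<in>euclid n. sqrt (sqnorm n (\<lambda>i. y i - x i)) < d \<longrightarrow> \<bar>g y - g x\<bar> < e)"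

text \<open>F is tempered on R^n: D alpha is the iterated partial derivative of F along
  the multi-index list alpha (D (i # alpha) = partial_i (D alpha)); all of them
  exist, are continuous (so F is smooth) and are polynomially bounded.\<close>
definition tempered :: "nat \<Rightarrow> ((nat \<Rightarrow> real) \<Rightarrow> real) \<Rightarrow> bool" where
  "tempered n F \<longleftrightarrow>
     (\<exists>D :: nat list \<Rightarrow> (nat \<Rightarrow> real) \<Rightarrow> real. D [] = F \<and>
        (\<forall>\<alpha>. set \<alpha> \<subseteq> {..<n} \<longrightarrow>
           cont_on_euclid n (D \<alpha>) \<and>
           (\<forall>i<n. \<forall>x\<in>euclid n. ((\<lambda>t. D \<alpha> (x(i := x i + t))) has_real_derivative D (i # \<alpha>) x) (at 0)) \<and>
           (\<exists>C N. \<forall>x\<in>euclid n. \<bar>D \<alpha> x\<bar> \<le> C * (1 + sqnorm n x) ^ N)))"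

definition tempered_affine :: "'a topology \<Rightarrow> ('a set \<Rightarrow> ('a \<Rightarrow> real) set) \<Rightarrow> ('a \<Rightarrow> real) \<Rightarrow> bool" where
  "tempered_affine X OX f \<longleftrightarrow>
     (\<exists>n Y i. affine_embedding X OX n Y i \<and>
        (\<exists>F. tempered n F \<and> (\<forall>x\<in>topspace X. f x = F (i x))))"

definition tempered_fns :: "'a topology \<Rightarrow> ('a set \<Rightarrow> ('a \<Rightarrow> real) set) \<Rightarrow> ('a \<Rightarrow> real) set" where
  "tempered_fns X OX =
     {t \<in> extensional (topspace X). \<exists>\<U>. finite \<U> \<and> \<Union>\<U> = topspace X \<and>
        (\<forall>U\<in>\<U>. openin X U \<and> affine_variety (subtopology X U) OX \<and>
                 tempered_affine (subtopology X U) OX (restrict t U))}"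

end

theory Submission
  imports Defs
begin

lemma pf_dep:
  assumes "p \<in> poly_fun n" "\<And>i. i < n \<Longrightarrow> x i = y i"
  shows "p x = p y"
  using assms(1) by induction (auto simp: assms(2))

lemma pf_upd: "p \<in> poly_fun n \<Longrightarrow> p (x(n := c)) = p x"
  by (rule pf_dep) auto

lemma pf_mono: "p \<in> poly_fun n \<Longrightarrow> n \<le> m \<Longrightarrow> p \<in> poly_fun m"
  by (induction rule: poly_fun.induct) (auto intro: poly_fun.intros)

lemma pf_Suc: "p \<in> poly_fun n \<Longrightarrow> p \<in> poly_fun (Suc n)"
  by (erule pf_mono) simp

lemma pf_const: "(\<lambda>x. c) \<in> poly_fun n"
  by (rule poly_fun.const)

lemma pf_add: "p \<in> poly_fun n \<Longrightarrow> q \<in> poly_fun n \<Longrightarrow> (\<lambda>x. p x + q x) \<in> poly_fun n"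
  by (rule poly_fun.add)

lemma pf_mult: "p \<in> poly_fun n \<Longrightarrow> q \<in> poly_fun n \<Longrightarrow> (\<lambda>x. p x * q x) \<in> poly_fun n"
  by (rule poly_fun.mult)

lemma pf_uminus: "p \<in> poly_fun n \<Longrightarrow> (\<lambda>x. - p x) \<in> poly_fun n"
  using pf_mult[OF pf_const[of "-1"], of p] by simp

lemma pf_diff: "p \<in> poly_fun n \<Longrightarrow> q \<in> poly_fun n \<Longrightarrow> (\<lambda>x. p x - q x) \<in> poly_fun n"
  using pf_add[OF _ pf_uminus, of p n q] by simp

lemma pf_sum: "finite A \<Longrightarrow> (\<And>a. a \<in> A \<Longrightarrow> f a \<in> poly_fun n) \<Longrightarrow> (\<lambda>x. \<Sum>a\<in>A. f a x) \<in> poly_fun n"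
  by (induction A rule: finite_induct) (auto intro: pf_const pf_add)

lemma pf_power: "p \<in> poly_fun n \<Longrightarrow> (\<lambda>x. p x ^ k) \<in> poly_fun n"
  by (induction k) (auto intro: pf_const pf_mult)

lemma pf_var: "i < n \<Longrightarrow> (\<lambda>x. x i) \<in> poly_fun n"
  by (rule poly_fun.var)

lemma pf_zero_const: "p \<in> poly_fun 0 \<Longrightarrow> \<exists>c. p = (\<lambda>x. c)"
  by (induction rule: poly_fun.induct) auto

section \<open>Finitely generated ideals\<close>

definition gen :: "nat \<Rightarrow> ((nat \<Rightarrow> real) \<Rightarrow> real) set \<Rightarrow> ((nat \<Rightarrow> real) \<Rightarrow> real) set" where
  "gen n S = {p. \<exists>h. (\<forall>s\<in>S. h s \<in> poly_fun n) \<and> p = (\<lambda>x. \<Sum>s\<in>S. h s x * s x)}"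

lemma gen_0: "(\<lambda>x. 0) \<in> gen n S"
  unfolding gen_def by (rule CollectI, rule exI[of _ "\<lambda>_ _. 0"]) (auto intro: pf_const)

lemma gen_add:
  assumes "p \<in> gen n S" "q \<in> gen n S"
  shows "(\<lambda>x. p x + q x) \<in> gen n S"
proof -
  from assms obtain h h' where h: "\<forall>s\<in>S. h s \<in> poly_fun n" "p = (\<lambda>x. \<Sum>s\<in>S. h s x * s x)"
    and h': "\<forall>s\<in>S. h' s \<in> poly_fun n" "q = (\<lambda>x. \<Sum>s\<in>S. h' s x * s x)"
    unfolding gen_def by blast
  show ?thesis unfolding gen_def
    by (rule CollectI, rule exI[of _ "\<lambda>s x. h s x + h' s x"])
      (auto simp: h h' pf_add sum.distrib distrib_right)
qed

lemma gen_smult: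
  assumes "p \<in> gen n S" "g \<in> poly_fun n"
  shows "(\<lambda>x. g x * p x) \<in> gen n S"
proof -
  from assms obtain h where h: "\<forall>s\<in>S. h s \<in> poly_fun n" "p = (\<lambda>x. \<Sum>s\<in>S. h s x * s x)"
    unfolding gen_def by blast
  show ?thesis unfolding gen_def
    by (rule CollectI, rule exI[of _ "\<lambda>s x. g x * h s x"])
      (auto simp: h assms(2) pf_mult sum_distrib_left mult.assoc)
qed

lemma gen_base:
  assumes "finite S" "s \<in> S"
  shows "s \<in> gen n S"
  unfolding gen_def
proof (rule CollectI, rule exI[of _ "\<lambda>t x. if t = s then 1 else 0"], intro conjI)
  show "\<forall>t\<in>S. (\<lambda>x. if t = s then 1 else 0) \<in> poly_fun n" by (auto intro: pf_const)
  have "(\<Sum>t\<in>S. (if t = s then 1 else 0) * t x) = s x" for x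
  proof -
    have "(\<Sum>t\<in>S. (if t = s then 1 else 0) * t x) = (\<Sum>t\<in>S. if t = s then s x else 0)"
      by (rule sum.cong) auto
    also have "\<dots> = s x" using assms by simp
    finally show ?thesis .
  qed
  then show "s = (\<lambda>x. \<Sum>t\<in>S. (if t = s then 1 else 0) * t x)" by auto
qed

lemma gen_sum:
  "finite A \<Longrightarrow> (\<And>a. a \<in> A \<Longrightarrow> f a \<in> gen n S) \<Longrightarrow> (\<lambda>x. \<Sum>a\<in>A. f a x) \<in> gen n S"
  by (induction A rule: finite_induct) (auto intro: gen_0 gen_add)

lemma gen_trans:
  assumes "S \<subseteq> gen n T" "p \<in> gen n S" "finite S"
  shows "p \<in> gen n T"
proof -
  from assms obtain h where h: "\<forall>s\<in>S. h s \<in> poly_fun n" "p = (\<lambda>x. \<Sum>s\<in>S. h s x * s x)"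
    unfolding gen_def by blast
  show ?thesis unfolding h(2)
    by (rule gen_sum[OF assms(3)]) (use assms(1) h(1) in \<open>auto intro: gen_smult\<close>)
qed

lemma gen_mono: "S \<subseteq> T \<Longrightarrow> finite T \<Longrightarrow> finite S \<Longrightarrow> p \<in> gen n S \<Longrightarrow> p \<in> gen n T"
  by (rule gen_trans[of S n T]) (auto intro: gen_base)

lemma gen_pf: "S \<subseteq> poly_fun n \<Longrightarrow> finite S \<Longrightarrow> p \<in> gen n S \<Longrightarrow> p \<in> poly_fun n"
  unfolding gen_def by (auto intro!: pf_sum pf_mult)

lemma gen_zero: "p \<in> gen n S \<Longrightarrow> (\<forall>s\<in>S. s x = 0) \<Longrightarrow> p x = 0"
  unfolding gen_def by (auto intro!: sum.neutral)

section \<open>Representation in the last variable\<close>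

definition rep :: "nat \<Rightarrow> ((nat \<Rightarrow> real) \<Rightarrow> real) \<Rightarrow> nat \<Rightarrow> (nat \<Rightarrow> (nat \<Rightarrow> real) \<Rightarrow> real) \<Rightarrow> bool" where
  "rep n p m c \<longleftrightarrow> (\<forall>k. c k \<in> poly_fun n) \<and> (\<forall>x. p x = (\<Sum>k<m. c k x * x n ^ k))"

lemma rep_add: "rep n p m c \<Longrightarrow> rep n q m c' \<Longrightarrow> rep n (\<lambda>x. p x + q x) m (\<lambda>k x. c k x + c' k x)"
  unfolding rep_def by (auto simp: pf_add sum.distrib distrib_right)

lemma rep_smult: "h \<in> poly_fun n \<Longrightarrow> rep n p m c \<Longrightarrow> rep n (\<lambda>x. h x * p x) m (\<lambda>k x. h x * c k x)"
  unfolding rep_def by (auto simp: pf_mult sum_distrib_left mult.assoc)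

lemma rep_pad: "rep n p m c \<Longrightarrow> m \<le> m' \<Longrightarrow> rep n p m' (\<lambda>k. if k < m then c k else (\<lambda>x. 0))"
  unfolding rep_def
proof (intro conjI allI)
  assume a: "(\<forall>k. c k \<in> poly_fun n) \<and> (\<forall>x. p x = (\<Sum>k<m. c k x * x n ^ k))" "m \<le> m'"
  show "(if k < m then c k else (\<lambda>x. 0)) \<in> poly_fun n" for k using a by (auto intro: pf_const)
  fix x
  have "(\<Sum>k<m'. (if k < m then c k else (\<lambda>x. 0)) x * x n ^ k) = (\<Sum>k<m. c k x * x n ^ k)"
    by (rule sum.mono_neutral_cong_right) (use a(2) in auto)
  then show "p x = (\<Sum>k<m'. (if k < m then c k else (\<lambda>x. 0)) x * x n ^ k)" using a by simp
qed

lemma rep_shift1: "rep n p m c \<Longrightarrow> rep n (\<lambda>x. x n * p x) (Suc m) (\<lambda>k. if k = 0 then (\<lambda>x. 0) else c (k - 1))"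
  unfolding rep_def
  by (simp only: sum.lessThan_Suc_shift) (auto simp: sum_distrib_left mult_ac pf_const)

lemma rep_shift: "rep n p m c \<Longrightarrow> \<exists>c'. rep n (\<lambda>x. x n ^ j * p x) (m + j) c' \<and> (\<forall>k<m+j. j \<le> k \<longrightarrow> c' k = c (k - j))"
proof (induction j)
  case 0 then show ?case by (auto intro!: exI[of _ c])
next
  case (Suc j)
  then obtain c' where c': "rep n (\<lambda>x. x n ^ j * p x) (m + j) c'" "\<forall>k<m+j. j \<le> k \<longrightarrow> c' k = c (k - j)"
    by blast
  from rep_shift1[OF c'(1)] show ?case
    using c'(2) by (auto intro!: exI simp: mult.assoc Suc_le_eq)
qed

lemma rep_zero: "rep n (\<lambda>x. 0) m (\<lambda>k x. 0)"
  unfolding rep_def by (auto intro: pf_const)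

lemma rep_sum:
  "finite G \<Longrightarrow> (\<And>g. g \<in> G \<Longrightarrow> rep n (f g) m (cf g)) \<Longrightarrow>
   rep n (\<lambda>x. \<Sum>g\<in>G. f g x) m (\<lambda>k x. \<Sum>g\<in>G. cf g k x)"
proof (induction G rule: finite_induct)
  case empty then show ?case using rep_zero by simp
next
  case (insert a G)
  then have "rep n (\<lambda>x. f a x + (\<Sum>g\<in>G. f g x)) m (\<lambda>k x. cf a k x + (\<Sum>g\<in>G. cf g k x))"
    by (intro rep_add) auto
  then show ?case using insert by simp
qed

definition reps :: "nat \<Rightarrow> ((nat \<Rightarrow> real) \<Rightarrow> real) \<Rightarrow> bool" where
  "reps n p \<longleftrightarrow> (\<exists>m c. rep n p m c)"

lemma reps_add: assumes "reps n p" "reps n q" shows "reps n (\<lambda>x. p x + q x)"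
proof -
  from assms obtain m c m' c' where a: "rep n p m c" "rep n q m' c'" unfolding reps_def by blast
  have "rep n p (max m m') (\<lambda>k. if k < m then c k else (\<lambda>x. 0))"
    "rep n q (max m m') (\<lambda>k. if k < m' then c' k else (\<lambda>x. 0))"
    by (rule rep_pad; use a in simp)+
  from rep_add[OF this] show ?thesis unfolding reps_def by blast
qed

lemma reps_sum: "finite A \<Longrightarrow> (\<And>a. a \<in> A \<Longrightarrow> reps n (f a)) \<Longrightarrow> reps n (\<lambda>x. \<Sum>a\<in>A. f a x)"
proof (induction A rule: finite_induct)
  case empty then show ?case using rep_zero unfolding reps_def by auto
next
  case (insert a A) then show ?case by (auto intro: reps_add)
qed

lemma reps_mult: assumes "reps n p" "reps n q" shows "reps n (\<lambda>x. p x * q x)"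
proof -
  from assms obtain m c where q: "rep n q m c" unfolding reps_def by blast
  from assms obtain m' c' where p: "rep n p m' c'" unfolding reps_def by blast
  have "reps n (\<lambda>x. \<Sum>k<m. c k x * (x n ^ k * p x))"
  proof (rule reps_sum)
    fix k
    obtain c'' where "rep n (\<lambda>x. x n ^ k * p x) (m' + k) c''" using rep_shift[OF p] by blast
    from rep_smult[OF _ this, of "c k"] q have "rep n (\<lambda>x. c k x * (x n ^ k * p x)) (m' + k) (\<lambda>ka x. c k x * c'' ka x)"
      unfolding rep_def by blast
    then show "reps n (\<lambda>x. c k x * (x n ^ k * p x))" unfolding reps_def by blast
  qed simp
  moreover have "(\<lambda>x. \<Sum>k<m. c k x * (x n ^ k * p x)) = (\<lambda>x. p x * q x)"
    using q unfolding rep_def by (auto simp: sum_distrib_left mult_ac)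
  ultimately show ?thesis by simp
qed

lemma reps_exists: "p \<in> poly_fun (Suc n) \<Longrightarrow> reps n p"
proof (induction rule: poly_fun.induct)
  case (const c)
  have "rep n (\<lambda>x. c) 1 (\<lambda>k x. c)" unfolding rep_def by (auto intro: pf_const)
  then show ?case unfolding reps_def by blast
next
  case (var i)
  show ?case
  proof (cases "i < n")
    case True
    have "rep n (\<lambda>x. x i) 1 (\<lambda>k x. x i)" unfolding rep_def using True by (auto intro: pf_var)
    then show ?thesis unfolding reps_def by blast
  next
    case False
    then have "i = n" using var by simp
    have "rep n (\<lambda>x. x i) 2 (\<lambda>k x. if k = 1 then 1 else 0)"
      unfolding rep_def using \<open>i = n\<close> by (auto intro: pf_const simp: numeral_2_eq_2)
    then show ?thesis unfolding reps_def by blast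
  qed
next
  case (add p q) then show ?case using reps_add by blast
next
  case (mult p q) then show ?case using reps_mult by blast
qed

section \<open>Hilbert basis theorem\<close>

lemma hilbert_0:
  assumes "Q \<subseteq> poly_fun 0"
  shows "\<exists>Q0\<subseteq>Q. finite Q0 \<and> Q \<subseteq> gen 0 Q0"
proof (cases "\<exists>q\<in>Q. q \<noteq> (\<lambda>x. 0)")
  case True
  then obtain q where q: "q \<in> Q" "q \<noteq> (\<lambda>x. 0)" by blast
  then obtain c where c: "q = (\<lambda>x. c)" using assms pf_zero_const by blast
  with q have "c \<noteq> 0" by auto
  have "q' \<in> gen 0 {q}" if "q' \<in> Q" for q'
  proof -
    obtain c' where c': "q' = (\<lambda>x. c')" using assms pf_zero_const \<open>q' \<in> Q\<close> by blast
    show ?thesis unfolding gen_def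
      by (rule CollectI, rule exI[of _ "\<lambda>_ _. c' / c"]) (use \<open>c \<noteq> 0\<close> in \<open>auto simp: c c' intro: pf_const\<close>)
  qed
  then show ?thesis using q by (intro exI[of _ "{q}"]) auto
next
  case False
  then show ?thesis using gen_0 by (intro exI[of _ "{}"]) auto
qed

lemma hilbert: "Q \<subseteq> poly_fun n \<Longrightarrow> \<exists>Q0\<subseteq>Q. finite Q0 \<and> Q \<subseteq> gen n Q0"
proof (induction n arbitrary: Q)
  case 0 then show ?case by (rule hilbert_0)
next
  case (Suc n)
  define I where "I = {p. \<exists>F\<subseteq>Q. finite F \<and> p \<in> gen (Suc n) F}"
  have I_add: "(\<lambda>x. p x + q x) \<in> I" if "p \<in> I" "q \<in> I" for p q
  proof -
    from that obtain F F' where F: "F \<subseteq> Q" "finite F" "p \<in> gen (Suc n) F"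
      and F': "F' \<subseteq> Q" "finite F'" "q \<in> gen (Suc n) F'" unfolding I_def by blast
    have "p \<in> gen (Suc n) (F \<union> F')" "q \<in> gen (Suc n) (F \<union> F')"
      using gen_mono F F' by (metis finite_Un sup_ge1 sup_ge2)+
    then show ?thesis unfolding I_def using F F' by (intro CollectI exI[of _ "F \<union> F'"]) (auto intro: gen_add)
  qed
  have I_smult: "(\<lambda>x. g x * p x) \<in> I" if "g \<in> poly_fun (Suc n)" "p \<in> I" for g p
    using that gen_smult unfolding I_def by blast
  have I_0: "(\<lambda>x. 0) \<in> I" unfolding I_def using gen_0 by blast
  have I_sum: "(\<lambda>x. \<Sum>a\<in>A. f a x) \<in> I" if "finite A" "\<And>a. a \<in> A \<Longrightarrow> f a \<in> I" for A and f :: "'b \<Rightarrow> _"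
    using that by (induction A rule: finite_induct) (auto intro: I_0 I_add)
  have Q_I: "Q \<subseteq> I"
  proof
    fix q assume "q \<in> Q" then show "q \<in> I" unfolding I_def using gen_base[of "{q}" q] by blast
  qed
  have I_pf: "I \<subseteq> poly_fun (Suc n)"
  proof
    fix p assume "p \<in> I"
    then obtain F where F: "F \<subseteq> Q" "finite F" "p \<in> gen (Suc n) F" unfolding I_def by blast
    then show "p \<in> poly_fun (Suc n)" using gen_pf[of F "Suc n" p] Suc.prems by blast
  qed
  define L where "L d = {c d | c p. p \<in> I \<and> rep n p (Suc d) c}" for d
  have L_pf: "L d \<subseteq> poly_fun n" for d unfolding L_def rep_def by auto
  obtain L0 where L0: "L0 \<subseteq> (\<Union>d. L d)" "finite L0" "(\<Union>d. L d) \<subseteq> gen n L0"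
    using Suc.IH[of "\<Union>d. L d"] L_pf by blast
  have "\<forall>l\<in>L0. \<exists>d. l \<in> L d" using L0(1) by blast
  then have "\<exists>dl. \<forall>l\<in>L0. l \<in> L (dl l)" by (rule bchoice)
  then obtain dl where dl: "\<forall>l\<in>L0. l \<in> L (dl l)" by blast
  define D where "D = Max (insert 0 (dl ` L0))"
  have dlD: "dl l \<le> D" if "l \<in> L0" for l unfolding D_def using that L0(2) by simp
  have "\<forall>d. \<exists>G. G \<subseteq> L d \<and> finite G \<and> L d \<subseteq> gen n G"
    using Suc.IH L_pf by blast
  then have "\<exists>G. \<forall>d. G d \<subseteq> L d \<and> finite (G d) \<and> L d \<subseteq> gen n (G d)" by (rule choice)
  then obtain G where "\<forall>d. G d \<subseteq> L d \<and> finite (G d) \<and> L d \<subseteq> gen n (G d)" by blast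
  then have G: "\<And>d. G d \<subseteq> L d" "\<And>d. finite (G d)" "\<And>d. L d \<subseteq> gen n (G d)" by auto
  define H where "H d = (if d \<le> D then G d else L0)" for d
  define e where "e d g = (if d \<le> D then d else dl g)" for d g
  have H1: "finite (H d)" for d unfolding H_def using G(2) L0(2) by simp
  have H2: "L d \<subseteq> gen n (H d)" for d
  proof (cases "d \<le> D")
    case True then show ?thesis unfolding H_def using G(3) by simp
  next
    case False then show ?thesis unfolding H_def using L0(3) by auto
  qed
  have H3: "e d g \<le> d \<and> g \<in> L (e d g)" if "g \<in> H d" for d g
  proof (cases "d \<le> D")
    case True then show ?thesis using G(1) that by (auto simp: H_def e_def)
  next
    case False then show ?thesis using dl dlD[of g] that by (auto simp: H_def e_def)
  qed
  note H = H1 H2 H3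
  define W where "W d g = (SOME p. p \<in> I \<and> (\<exists>c. rep n p (Suc d) c \<and> c d = g))" for d g
  have W: "W d g \<in> I \<and> (\<exists>c. rep n (W d g) (Suc d) c \<and> c d = g)" if "g \<in> L d" for d g
  proof -
    from that have "\<exists>p. p \<in> I \<and> (\<exists>c. rep n p (Suc d) c \<and> c d = g)" unfolding L_def by blast
    then show ?thesis unfolding W_def by (rule someI_ex)
  qed
  define P where "P = (\<Union>d\<le>Suc D. (\<lambda>g. W (e d g) g) ` H d)"
  have P_fin: "finite P" unfolding P_def using H(1) by auto
  have P_I: "P \<subseteq> I"
  proof -
    have "W (e d g) g \<in> I" if "g \<in> H d" for d g using H(3)[OF that] W by blast
    then show ?thesis unfolding P_def by blast
  qed
  have P_wit: "W (e d g) g \<in> P" if "g \<in> H d" for d g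
  proof (cases "d \<le> Suc D")
    case True then show ?thesis unfolding P_def using that by (intro UN_I[of d]) auto
  next
    case False
    then have "H d = H (Suc D)" "e d g = e (Suc D) g" unfolding H_def e_def by auto
    then show ?thesis unfolding P_def using that by (intro UN_I[of "Suc D"]) auto
  qed
  have main: "\<forall>p c. p \<in> I \<longrightarrow> rep n p d c \<longrightarrow> p \<in> gen (Suc n) P" for d
  proof (induction d)
    case 0
    have "p = (\<lambda>x. 0)" if "rep n p 0 c" for p c using that unfolding rep_def by auto
    then show ?case using gen_0 by blast
  next
    case (Suc d)
    show ?case
    proof (intro allI impI)
      fix p c assume p: "p \<in> I" "rep n p (Suc d) c"
      then have "c d \<in> L d" unfolding L_def by blast
      then have "c d \<in> gen n (H d)" using H(2) by blast
      then obtain hh where hh: "\<forall>g\<in>H d. hh g \<in> poly_fun n" "c d = (\<lambda>x. \<Sum>g\<in>H d. hh g x * g x)"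
        unfolding gen_def by blast
      define ww where "ww g = (\<lambda>x. x n ^ (d - e d g) * W (e d g) g x)" for g
      have ww: "ww g \<in> I \<and> ww g \<in> gen (Suc n) P \<and> (\<exists>cw. rep n (ww g) (Suc d) cw \<and> cw d = g)"
        if "g \<in> H d" for g
      proof (intro conjI)
        have ed: "e d g \<le> d" "g \<in> L (e d g)" using H(3) that by auto
        have pw: "(\<lambda>x. x n ^ (d - e d g)) \<in> poly_fun (Suc n)" by (intro pf_power pf_var) simp
        show "ww g \<in> I" unfolding ww_def using I_smult[OF pw] W[OF ed(2)] by blast
        show "ww g \<in> gen (Suc n) P" unfolding ww_def
          using gen_smult[OF gen_base[OF P_fin P_wit[OF that]] pw] .
        obtain cw where cw: "rep n (W (e d g) g) (Suc (e d g)) cw" "cw (e d g) = g" using W[OF ed(2)] by blast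
        obtain cw' where cw': "rep n (ww g) (Suc (e d g) + (d - e d g)) cw'"
          "\<forall>k<Suc (e d g) + (d - e d g). (d - e d g) \<le> k \<longrightarrow> cw' k = cw (k - (d - e d g))"
          using rep_shift[OF cw(1), of "d - e d g"] unfolding ww_def by blast
        have "Suc (e d g) + (d - e d g) = Suc d" using ed by simp
        then show "\<exists>cw. rep n (ww g) (Suc d) cw \<and> cw d = g"
          using cw' cw(2) ed by (intro exI[of _ cw']) auto
      qed
      then have "\<forall>g\<in>H d. \<exists>cw. rep n (ww g) (Suc d) cw \<and> cw d = g" by blast
      then have "\<exists>CW. \<forall>g\<in>H d. rep n (ww g) (Suc d) (CW g) \<and> CW g d = g" by (rule bchoice)
      then obtain CW where CW: "\<And>g. g \<in> H d \<Longrightarrow> rep n (ww g) (Suc d) (CW g) \<and> CW g d = g"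
        by blast
      define r where "r = (\<lambda>x. \<Sum>g\<in>H d. hh g x * ww g x)"
      have r_rep: "rep n r (Suc d) (\<lambda>k x. \<Sum>g\<in>H d. hh g x * CW g k x)"
        unfolding r_def by (rule rep_sum[OF H(1)]) (use CW hh(1) in \<open>auto intro: rep_smult\<close>)
      have r_I: "r \<in> I" unfolding r_def using ww hh(1) pf_Suc by (intro I_sum H(1) I_smult) auto
      have r_gen: "r \<in> gen (Suc n) P" unfolding r_def using ww hh(1) pf_Suc
        by (intro gen_sum H(1)) (auto intro: gen_smult)
      define p' where "p' = (\<lambda>x. p x + (- 1) * r x)"
      have "rep n p' (Suc d) (\<lambda>k x. c k x + (- 1) * (\<Sum>g\<in>H d. hh g x * CW g k x))"
        unfolding p'_def by (rule rep_add[OF p(2) rep_smult[OF pf_const r_rep]])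
      moreover have "c d x + (- 1) * (\<Sum>g\<in>H d. hh g x * CW g d x) = 0" for x
      proof -
        have "(\<Sum>g\<in>H d. hh g x * CW g d x) = (\<Sum>g\<in>H d. hh g x * g x)"
          by (rule sum.cong) (use CW in auto)
        then show ?thesis using hh(2) by simp
      qed
      ultimately have "rep n p' d (\<lambda>k x. c k x + (- 1) * (\<Sum>g\<in>H d. hh g x * CW g k x))"
        unfolding rep_def by simp
      moreover have "p' \<in> I" unfolding p'_def using p(1) r_I by (intro I_add I_smult pf_const)
      ultimately have "p' \<in> gen (Suc n) P" using Suc.IH by blast
      then have "(\<lambda>x. p' x + r x) \<in> gen (Suc n) P" using r_gen by (rule gen_add)
      moreover have "(\<lambda>x. p' x + r x) = p" unfolding p'_def by simp
      ultimately show "p \<in> gen (Suc n) P" by simp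
    qed
  qed
  have I_gen: "I \<subseteq> gen (Suc n) P"
  proof
    fix p assume "p \<in> I"
    then obtain m c where "rep n p m c" using I_pf reps_exists unfolding reps_def by blast
    then show "p \<in> gen (Suc n) P" using main \<open>p \<in> I\<close> by blast
  qed
  have "\<forall>w\<in>P. \<exists>F. F \<subseteq> Q \<and> finite F \<and> w \<in> gen (Suc n) F" using P_I unfolding I_def by blast
  then have "\<exists>FF. \<forall>w\<in>P. FF w \<subseteq> Q \<and> finite (FF w) \<and> w \<in> gen (Suc n) (FF w)" by (rule bchoice)
  then obtain FF where FF: "\<And>w. w \<in> P \<Longrightarrow> FF w \<subseteq> Q \<and> finite (FF w) \<and> w \<in> gen (Suc n) (FF w)"
    by blast
  define Q0 where "Q0 = (\<Union>w\<in>P. FF w)"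
  have Q0: "Q0 \<subseteq> Q" "finite Q0" unfolding Q0_def using FF P_fin by auto
  have "P \<subseteq> gen (Suc n) Q0"
  proof
    fix w assume "w \<in> P"
    then show "w \<in> gen (Suc n) Q0" using FF[OF \<open>w \<in> P\<close>] Q0(2)
      by (intro gen_mono[of "FF w" Q0]) (auto simp: Q0_def)
  qed
  then have "Q \<subseteq> gen (Suc n) Q0" using Q_I I_gen gen_trans[OF _ _ P_fin, of "Suc n" Q0] by blast
  then show ?case using Q0 by blast
qed

lemma zfinite:
  assumes "Q \<subseteq> poly_fun n"
  shows "\<exists>Q0\<subseteq>Q. finite Q0 \<and> (\<forall>x. (\<forall>q\<in>Q0. q x = 0) \<longrightarrow> (\<forall>q\<in>Q. q x = 0))"
proof -
  obtain Q0 where "Q0 \<subseteq> Q" "finite Q0" "Q \<subseteq> gen n Q0" using hilbert[OF assms] by blast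
  then show ?thesis using gen_zero by (intro exI[of _ Q0]) blast
qed

lemma homog:
  assumes "p' \<in> poly_fun (Suc n)" "q \<in> poly_fun n"
  shows "\<exists>p''\<in>poly_fun n. \<exists>m. \<forall>z. q z \<noteq> 0 \<longrightarrow> p' (z(n := 1 / q z)) * q z ^ m = p'' z"
proof -
  obtain m c where c: "rep n p' m c" using reps_exists[OF assms(1)] unfolding reps_def by blast
  define p'' where "p'' = (\<lambda>z. \<Sum>k<m. c k z * q z ^ (m - k))"
  have "p'' \<in> poly_fun n" unfolding p''_def using c assms(2)
    by (intro pf_sum pf_mult pf_power) (auto simp: rep_def)
  moreover have "p' (z(n := 1 / q z)) * q z ^ m = p'' z" if "q z \<noteq> 0" for z
  proof -
    have cz: "\<forall>k. c k (z(n := 1 / q z)) = c k z" using c pf_upd unfolding rep_def by blast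
    have "p' (z(n := 1 / q z)) * q z ^ m = (\<Sum>k<m. c k z * (1 / q z) ^ k * q z ^ m)"
      using c cz unfolding rep_def by (simp add: sum_distrib_right)
    also have "\<dots> = p'' z" unfolding p''_def
    proof (rule sum.cong)
      fix k assume "k \<in> {..<m}"
      then have "q z ^ m = q z ^ k * q z ^ (m - k)" by (simp flip: power_add)
      then show "c k z * (1 / q z) ^ k * q z ^ m = c k z * q z ^ (m - k)"
        using that by (simp add: power_one_over field_simps)
    qed simp
    finally show ?thesis .
  qed
  ultimately show ?thesis by blast
qed

definition pD :: "'a topology \<Rightarrow> ('a \<Rightarrow> nat \<Rightarrow> real) \<Rightarrow> ((nat \<Rightarrow> real) \<Rightarrow> real) \<Rightarrow> 'a set" where
  "pD T i q = {x \<in> topspace T. q (i x) \<noteq> 0}"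

definition pj :: "nat \<Rightarrow> ('a \<Rightarrow> nat \<Rightarrow> real) \<Rightarrow> ((nat \<Rightarrow> real) \<Rightarrow> real) \<Rightarrow> 'a \<Rightarrow> nat \<Rightarrow> real" where
  "pj n i q = (\<lambda>x. (i x)(n := 1 / q (i x)))"

definition pY :: "nat \<Rightarrow> (nat \<Rightarrow> real) set \<Rightarrow> ((nat \<Rightarrow> real) \<Rightarrow> real) \<Rightarrow> (nat \<Rightarrow> real) set" where
  "pY n Y q = {y \<in> euclid (Suc n). y(n := 0) \<in> Y \<and> y n * q y = 1}"

lemma alg_sub: "algebraic_set n Y \<Longrightarrow> Y \<subseteq> euclid n"
  unfolding algebraic_set_def zariski_closed_in_def by auto

context
  fixes T :: "'a topology" and OX n Y i q
  assumes AE: "affine_embedding T OX n Y i" and q: "q \<in> poly_fun n"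
begin

lemma AE_alg: "algebraic_set n Y" using AE unfolding affine_embedding_def by blast
lemma AE_bij: "bij_betw i (topspace T) Y" using AE unfolding affine_embedding_def by blast
lemma AE_open: "W \<subseteq> topspace T \<Longrightarrow> openin T W \<longleftrightarrow> zariski_open_in n Y (i ` W)"
  using AE unfolding affine_embedding_def by blast
lemma AE_reg: "openin T W \<Longrightarrow> f \<in> OX W \<longleftrightarrow> f \<in> extensional W \<and> regular_on n Y (i ` W) (\<lambda>y. f (inv_into (topspace T) i y))"
  using AE unfolding affine_embedding_def by blast

lemma i_Y: "x \<in> topspace T \<Longrightarrow> i x \<in> Y" using AE_bij by (auto simp: bij_betw_def)
lemma i_euclid: "x \<in> topspace T \<Longrightarrow> i x \<in> euclid n" using i_Y alg_sub[OF AE_alg] by blast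
lemma i_n: "x \<in> topspace T \<Longrightarrow> i x n = 0" using i_euclid unfolding euclid_def by blast
lemma i_inj: "x \<in> topspace T \<Longrightarrow> x' \<in> topspace T \<Longrightarrow> i x = i x' \<Longrightarrow> x = x'"
  using AE_bij by (auto simp: bij_betw_def inj_on_def)
lemma i_surj: "z \<in> Y \<Longrightarrow> \<exists>x\<in>topspace T. i x = z" using AE_bij by (auto simp: bij_betw_def)
lemma i_inv: "x \<in> topspace T \<Longrightarrow> inv_into (topspace T) i (i x) = x"
  using AE_bij by (auto simp: bij_betw_def)

lemma pD_sub: "pD T i q \<subseteq> topspace T" unfolding pD_def by auto

lemma pj_0: "x \<in> topspace T \<Longrightarrow> (pj n i q x)(n := 0) = i x"
  unfolding pj_def using i_n by auto

lemma q_pj: "q (pj n i q x) = q (i x)" unfolding pj_def using pf_upd[OF q] by simp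

lemma pf_pj: "p \<in> poly_fun n \<Longrightarrow> p (pj n i q x) = p (i x)" unfolding pj_def using pf_upd by simp

lemma pj_image: "W \<subseteq> pD T i q \<Longrightarrow> pj n i q ` W = {y \<in> pY n Y q. y(n := 0) \<in> i ` W}"
proof (intro equalityI subsetI)
  fix y assume W: "W \<subseteq> pD T i q" and "y \<in> pj n i q ` W"
  then obtain x where x: "x \<in> W" "y = pj n i q x" by blast
  then have xT: "x \<in> topspace T" "q (i x) \<noteq> 0" using W unfolding pD_def by auto
  have "y \<in> euclid (Suc n)" using i_euclid[OF xT(1)] unfolding x(2) pj_def euclid_def by auto
  moreover have "y(n := 0) = i x" using pj_0[OF xT(1)] x by simp
  moreover have "y n * q y = 1" using xT(2) q_pj unfolding x(2) by (simp add: pj_def)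
  ultimately show "y \<in> {y \<in> pY n Y q. y(n := 0) \<in> i ` W}" unfolding pY_def using i_Y[OF xT(1)] x(1) by auto
next
  fix y assume W: "W \<subseteq> pD T i q" and y: "y \<in> {y \<in> pY n Y q. y(n := 0) \<in> i ` W}"
  then obtain x where x: "x \<in> W" "y(n := 0) = i x" by auto
  have "q y = q (i x)" using pf_upd[OF q, of y 0] x by simp
  moreover have "y n * q y = 1" using y unfolding pY_def by auto
  ultimately have yq: "y n * q (i x) = 1" by simp
  then have "q (i x) \<noteq> 0" by auto
  with yq have "y n = 1 / q (i x)" by (simp add: eq_divide_eq)
  then have "pj n i q x = y" unfolding pj_def using x(2) by (metis fun_upd_triv fun_upd_upd)
  then show "y \<in> pj n i q ` W" using x by blast
qed

lemma iD_image: "i ` pD T i q = {z \<in> Y. q z \<noteq> 0}"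
  unfolding pD_def using i_Y i_surj by auto

lemma pY_q: "y \<in> pY n Y q \<Longrightarrow> q y \<noteq> 0" unfolding pY_def by auto

lemma pj_image_D: "pj n i q ` pD T i q = pY n Y q"
proof -
  have "y(n := 0) \<in> i ` pD T i q" if "y \<in> pY n Y q" for y
  proof -
    have "q (y(n := 0)) = q y" using pf_upd[OF q] .
    then show ?thesis unfolding iD_image using that pY_q unfolding pY_def by auto
  qed
  then show ?thesis using pj_image[of "pD T i q"] by auto
qed

lemma ZT:
  assumes W: "W \<subseteq> pD T i q"
  shows "zariski_open_in n Y (i ` W) \<longleftrightarrow> zariski_open_in (Suc n) (pY n Y q) (pj n i q ` W)"
proof
  assume "zariski_open_in n Y (i ` W)"
  then obtain P where P: "P \<subseteq> poly_fun n" "Y - i ` W = {y \<in> Y. \<forall>p\<in>P. p y = 0}"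
    unfolding zariski_open_in_def zariski_closed_in_def by blast
  have "pY n Y q - pj n i q ` W = {y \<in> pY n Y q. \<forall>p\<in>P. p y = 0}"
  proof -
    have "y \<notin> pj n i q ` W \<longleftrightarrow> (\<forall>p\<in>P. p y = 0)" if y: "y \<in> pY n Y q" for y
    proof -
      have Yy: "y(n := 0) \<in> Y" using y unfolding pY_def by auto
      have "y \<notin> pj n i q ` W \<longleftrightarrow> y(n := 0) \<notin> i ` W" using pj_image[OF W] y by auto
      also have "\<dots> \<longleftrightarrow> (\<forall>p\<in>P. p (y(n := 0)) = 0)" using P(2) Yy by blast
      also have "\<dots> \<longleftrightarrow> (\<forall>p\<in>P. p y = 0)"
      proof -
        have "\<forall>p\<in>P. p (y(n := 0)) = p y" using P(1) pf_upd by blast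
        then show ?thesis by metis
      qed
      finally show ?thesis .
    qed
    then show ?thesis by auto
  qed
  moreover have "pj n i q ` W \<subseteq> pY n Y q" using pj_image[OF W] by auto
  moreover have "P \<subseteq> poly_fun (Suc n)" using P(1) pf_Suc by auto
  ultimately show "zariski_open_in (Suc n) (pY n Y q) (pj n i q ` W)"
    unfolding zariski_open_in_def zariski_closed_in_def by blast
next
  assume "zariski_open_in (Suc n) (pY n Y q) (pj n i q ` W)"
  then obtain P where P: "P \<subseteq> poly_fun (Suc n)" "pY n Y q - pj n i q ` W = {y \<in> pY n Y q. \<forall>p\<in>P. p y = 0}"
    unfolding zariski_open_in_def zariski_closed_in_def by blast
  have "\<forall>p\<in>P. \<exists>h. h \<in> poly_fun n \<and> (\<exists>m. \<forall>z. q z \<noteq> 0 \<longrightarrow> p (z(n := 1 / q z)) * q z ^ m = h z)"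
    using homog[OF _ q] P(1) by blast
  then have "\<exists>HP. \<forall>p\<in>P. HP p \<in> poly_fun n \<and> (\<exists>m. \<forall>z. q z \<noteq> 0 \<longrightarrow> p (z(n := 1 / q z)) * q z ^ m = HP p z)"
    by (rule bchoice)
  then obtain HP where HP: "\<And>p. p \<in> P \<Longrightarrow> HP p \<in> poly_fun n"
    "\<And>p. p \<in> P \<Longrightarrow> \<exists>m. \<forall>z. q z \<noteq> 0 \<longrightarrow> p (z(n := 1 / q z)) * q z ^ m = HP p z" by blast
  define P'' where "P'' = (\<lambda>p z. q z * HP p z) ` P"
  have P''_pf: "P'' \<subseteq> poly_fun n" unfolding P''_def using HP(1) q by (auto intro: pf_mult)
  have "z \<notin> i ` W \<longleftrightarrow> (\<forall>p\<in>P''. p z = 0)" if z: "z \<in> Y" for z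
  proof (cases "q z = 0")
    case True
    then have "z \<notin> i ` W" using W iD_image by auto
    then show ?thesis using True unfolding P''_def by auto
  next
    case False
    then have "z \<in> i ` pD T i q" using iD_image z by auto
    then obtain x where x: "x \<in> pD T i q" "i x = z" by blast
    define y where "y = pj n i q x"
    have y: "y \<in> pY n Y q" "y(n := 0) = z" "y = z(n := 1 / q z)"
      using pj_image_D x pj_0 pD_sub unfolding y_def by (auto simp: pj_def)
    have "z \<notin> i ` W \<longleftrightarrow> y \<notin> pj n i q ` W" using pj_image[OF W] y by auto
    also have "\<dots> \<longleftrightarrow> (\<forall>p\<in>P. p y = 0)" using P(2) y(1) by blast
    also have "\<dots> \<longleftrightarrow> (\<forall>p\<in>P. HP p z = 0)"
    proof -
      have "p y = 0 \<longleftrightarrow> HP p z = 0" if pP: "p \<in> P" for p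
      proof -
        obtain m where "\<forall>z. q z \<noteq> 0 \<longrightarrow> p (z(n := 1 / q z)) * q z ^ m = HP p z" using HP(2)[OF pP] by blast
        then have "p y * q z ^ m = HP p z" using False y(3) by simp
        then show ?thesis using False by auto
      qed
      then show ?thesis by blast
    qed
    also have "\<dots> \<longleftrightarrow> (\<forall>p\<in>P''. p z = 0)" unfolding P''_def using False by auto
    finally show ?thesis .
  qed
  then have "Y - i ` W = {z \<in> Y. \<forall>p\<in>P''. p z = 0}" by auto
  moreover have "i ` W \<subseteq> Y" using W pD_sub i_Y by auto
  ultimately show "zariski_open_in n Y (i ` W)"
    unfolding zariski_open_in_def zariski_closed_in_def using P''_pf by blast
qed


lemma pD_open: "openin T (pD T i q)"
proof -
  have "Y - i ` pD T i q = {z \<in> Y. \<forall>p\<in>{q}. p z = 0}" using iD_image by auto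
  moreover have "i ` pD T i q \<subseteq> Y" using iD_image by auto
  ultimately have "zariski_open_in n Y (i ` pD T i q)"
    unfolding zariski_open_in_def zariski_closed_in_def using q by blast
  then show ?thesis using AE_open[OF pD_sub] by blast
qed

lemma pj_inj: "inj_on (pj n i q) (pD T i q)"
proof (rule inj_onI)
  fix x x' assume "x \<in> pD T i q" "x' \<in> pD T i q" "pj n i q x = pj n i q x'"
  moreover have "x \<in> topspace T" "x' \<in> topspace T" using calculation pD_sub by auto
  ultimately have "i x = i x'" using pj_0 by metis
  then show "x = x'" using i_inj \<open>x \<in> topspace T\<close> \<open>x' \<in> topspace T\<close> by blast
qed

lemma pj_inv: "x \<in> pD T i q \<Longrightarrow> inv_into (pD T i q) (pj n i q) (pj n i q x) = x"
  using pj_inj by simp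

lemma pY_alg: "algebraic_set (Suc n) (pY n Y q)"
proof -
  obtain P where P: "P \<subseteq> poly_fun n" "Y = {y \<in> euclid n. \<forall>p\<in>P. p y = 0}"
    using AE_alg unfolding algebraic_set_def zariski_closed_in_def by blast
  define P' where "P' = insert (\<lambda>y. y n * q y - 1) P"
  have "P' \<subseteq> poly_fun (Suc n)" unfolding P'_def using P(1) pf_Suc q
    by (auto intro!: pf_diff pf_mult pf_var pf_const)
  moreover have "pY n Y q = {y \<in> euclid (Suc n). \<forall>p\<in>P'. p y = 0}"
  proof -
    have "y(n := 0) \<in> Y \<longleftrightarrow> (\<forall>p\<in>P. p y = 0)" if "y \<in> euclid (Suc n)" for y
    proof -
      have "y(n := 0) \<in> euclid n" using that unfolding euclid_def by auto
      moreover have "\<forall>p\<in>P. p (y(n := 0)) = p y" using P(1) pf_upd by blast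
      moreover have "y(n := 0) \<in> Y \<longleftrightarrow> y(n := 0) \<in> euclid n \<and> (\<forall>p\<in>P. p (y(n := 0)) = 0)"
        using P(2) by blast
      moreover have "(\<forall>p\<in>P. p (y(n := 0)) = 0) \<longleftrightarrow> (\<forall>p\<in>P. p y = 0)"
        by (rule ball_cong) (use calculation(2) in auto)
      ultimately show ?thesis by blast
    qed
    then show ?thesis unfolding pY_def P'_def by auto
  qed
  ultimately show ?thesis unfolding algebraic_set_def zariski_closed_in_def by blast
qed

lemma REG:
  assumes W: "W \<subseteq> pD T i q"
  shows "regular_on n Y (i ` W) (\<lambda>y. f (inv_into (topspace T) i y)) \<longleftrightarrow>
         regular_on (Suc n) (pY n Y q) (pj n i q ` W) (\<lambda>y. f (inv_into (pD T i q) (pj n i q) y))"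
    (is "?L \<longleftrightarrow> ?R")
proof
  have WT: "W \<subseteq> topspace T" using W pD_sub by auto
  assume L: ?L
  show ?R unfolding regular_on_def
  proof
    fix y assume "y \<in> pj n i q ` W"
    then obtain x where x: "x \<in> W" "y = pj n i q x" by blast
    then have "i x \<in> i ` W" by blast
    then obtain N p r where N: "zariski_open_in n Y N" "i x \<in> N" "N \<subseteq> i ` W" "p \<in> poly_fun n" "r \<in> poly_fun n"
      "\<forall>u\<in>N. r u \<noteq> 0 \<and> f (inv_into (topspace T) i u) = p u / r u"
      using L unfolding regular_on_def by blast
    define WN where "WN = {x \<in> W. i x \<in> N}"
    have WN: "WN \<subseteq> pD T i q" "i ` WN = N" using W N(3) unfolding WN_def by auto
    have R1: "zariski_open_in (Suc n) (pY n Y q) (pj n i q ` WN)" using ZT[OF WN(1)] WN(2) N(1) by simp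
    have R2: "y \<in> pj n i q ` WN" using x N(2) unfolding WN_def by blast
    have R3: "pj n i q ` WN \<subseteq> pj n i q ` W" unfolding WN_def by blast
    have R4: "\<forall>u\<in>pj n i q ` WN. r u \<noteq> 0 \<and> f (inv_into (pD T i q) (pj n i q) u) = p u / r u"
    proof
      fix u assume "u \<in> pj n i q ` WN"
      then obtain x' where x': "x' \<in> WN" "u = pj n i q x'" by blast
      have "x' \<in> topspace T" "x' \<in> pD T i q" using x' WN(1) pD_sub by auto
      then show "r u \<noteq> 0 \<and> f (inv_into (pD T i q) (pj n i q) u) = p u / r u"
        using N(6) x' pf_pj[OF N(4)] pf_pj[OF N(5)] pj_inv i_inv unfolding WN_def by auto
    qed
    show "\<exists>N. zariski_open_in (Suc n) (pY n Y q) N \<and> y \<in> N \<and> N \<subseteq> pj n i q ` W \<and>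
        (\<exists>p\<in>poly_fun (Suc n). \<exists>r\<in>poly_fun (Suc n). \<forall>u\<in>N. r u \<noteq> 0 \<and>
           f (inv_into (pD T i q) (pj n i q) u) = p u / r u)"
    proof (rule exI[of _ "pj n i q ` WN"], intro conjI)
      show "\<exists>p\<in>poly_fun (Suc n). \<exists>r\<in>poly_fun (Suc n). \<forall>u\<in>pj n i q ` WN. r u \<noteq> 0 \<and>
           f (inv_into (pD T i q) (pj n i q) u) = p u / r u"
        using R4 pf_Suc[OF N(4)] pf_Suc[OF N(5)] by blast
    qed (use R1 R2 R3 in auto)
  qed
next
  assume R: ?R
  show ?L unfolding regular_on_def
  proof
    fix z assume "z \<in> i ` W"
    then obtain x where x: "x \<in> W" "z = i x" by blast
    then have "pj n i q x \<in> pj n i q ` W" by blast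
    then obtain N p r where N: "zariski_open_in (Suc n) (pY n Y q) N" "pj n i q x \<in> N" "N \<subseteq> pj n i q ` W"
      "p \<in> poly_fun (Suc n)" "r \<in> poly_fun (Suc n)"
      "\<forall>u\<in>N. r u \<noteq> 0 \<and> f (inv_into (pD T i q) (pj n i q) u) = p u / r u"
      using R unfolding regular_on_def by blast
    define WN where "WN = {x \<in> W. pj n i q x \<in> N}"
    have WN: "WN \<subseteq> pD T i q" "pj n i q ` WN = N" using W N(3) unfolding WN_def by auto
    have ZN: "zariski_open_in n Y (i ` WN)" using ZT[OF WN(1)] WN(2) N(1) by simp
    obtain hp m1 where hp: "hp \<in> poly_fun n" "\<forall>z. q z \<noteq> 0 \<longrightarrow> p (z(n := 1 / q z)) * q z ^ m1 = hp z"
      using homog[OF N(4) q] by blast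
    obtain hr m2 where hr: "hr \<in> poly_fun n" "\<forall>z. q z \<noteq> 0 \<longrightarrow> r (z(n := 1 / q z)) * q z ^ m2 = hr z"
      using homog[OF N(5) q] by blast
    have S4: "\<forall>u\<in>i ` WN. hr u * q u ^ m1 \<noteq> 0 \<and>
        f (inv_into (topspace T) i u) = hp u * q u ^ m2 / (hr u * q u ^ m1)"
    proof
      fix u assume "u \<in> i ` WN"
      then obtain x' where x': "x' \<in> WN" "u = i x'" by blast
      have x'T: "x' \<in> topspace T" "x' \<in> pD T i q" using x' WN(1) pD_sub by auto
      then have qu: "q u \<noteq> 0" using x' unfolding pD_def by auto
      have pjx: "pj n i q x' = u(n := 1 / q u)" unfolding pj_def x' by simp
      have inN: "pj n i q x' \<in> N" using x' unfolding WN_def by auto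
      have e1: "p (pj n i q x') * q u ^ m1 = hp u" using hp(2) qu pjx by simp
      have e2: "r (pj n i q x') * q u ^ m2 = hr u" using hr(2) qu pjx by simp
      have rn: "r (pj n i q x') \<noteq> 0" using N(6) inN by blast
      have fv: "f (inv_into (topspace T) i u) = p (pj n i q x') / r (pj n i q x')"
        using N(6) inN pj_inv[OF x'T(2)] i_inv[OF x'T(1)] x'(2) by auto
      have "hr u \<noteq> 0" using e2 rn qu by auto
      moreover have "f (inv_into (topspace T) i u) = hp u * q u ^ m2 / (hr u * q u ^ m1)"
        unfolding fv e1[symmetric] e2[symmetric] using qu rn by (simp add: field_simps)
      ultimately show "hr u * q u ^ m1 \<noteq> 0 \<and> f (inv_into (topspace T) i u) = hp u * q u ^ m2 / (hr u * q u ^ m1)"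
        using qu by simp
    qed
    have S2: "z \<in> i ` WN" using x N(2) unfolding WN_def by blast
    have S3: "i ` WN \<subseteq> i ` W" unfolding WN_def by blast
    have S5: "(\<lambda>u. hp u * q u ^ m2) \<in> poly_fun n" "(\<lambda>u. hr u * q u ^ m1) \<in> poly_fun n"
      using hp(1) hr(1) q by (auto intro: pf_mult pf_power)
    show "\<exists>N. zariski_open_in n Y N \<and> z \<in> N \<and> N \<subseteq> i ` W \<and>
        (\<exists>p\<in>poly_fun n. \<exists>r\<in>poly_fun n. \<forall>u\<in>N. r u \<noteq> 0 \<and> f (inv_into (topspace T) i u) = p u / r u)"
    proof (rule exI[of _ "i ` WN"], intro conjI)
      show "\<exists>p\<in>poly_fun n. \<exists>r\<in>poly_fun n. \<forall>u\<in>i ` WN. r u \<noteq> 0 \<and> f (inv_into (topspace T) i u) = p u / r u"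
        apply (rule bexI[of _ "\<lambda>u. hp u * q u ^ m2"], rule bexI[of _ "\<lambda>u. hr u * q u ^ m1"])
        using S4 S5 by auto
    qed (use ZN S2 S3 in auto)
  qed
qed

lemma principal_affine:
  "openin T (pD T i q) \<and> affine_embedding (subtopology T (pD T i q)) OX (Suc n) (pY n Y q) (pj n i q)"
proof -
  have top: "topspace (subtopology T (pD T i q)) = pD T i q" using pD_sub by auto
  have op: "openin (subtopology T (pD T i q)) W \<longleftrightarrow> openin T W \<and> W \<subseteq> pD T i q" for W
    using openin_open_subtopology[OF pD_open] .
  have "bij_betw (pj n i q) (pD T i q) (pY n Y q)"
    unfolding bij_betw_def using pj_inj pj_image_D by blast
  moreover have "openin (subtopology T (pD T i q)) W \<longleftrightarrow> zariski_open_in (Suc n) (pY n Y q) (pj n i q ` W)"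
    if "W \<subseteq> pD T i q" for W
  proof -
    have WT: "W \<subseteq> topspace T" using that pD_sub by auto
    have "openin (subtopology T (pD T i q)) W \<longleftrightarrow> openin T W" using op that by blast
    also have "\<dots> \<longleftrightarrow> zariski_open_in n Y (i ` W)" using AE_open[OF WT] .
    also have "\<dots> \<longleftrightarrow> zariski_open_in (Suc n) (pY n Y q) (pj n i q ` W)" using ZT[OF that] .
    finally show ?thesis .
  qed
  moreover have "f \<in> OX W \<longleftrightarrow> f \<in> extensional W \<and>
      regular_on (Suc n) (pY n Y q) (pj n i q ` W) (\<lambda>y. f (inv_into (pD T i q) (pj n i q) y))"
    if "openin (subtopology T (pD T i q)) W" for W f
  proof -
    have W: "openin T W" "W \<subseteq> pD T i q" using op that by auto
    show ?thesis using AE_reg[OF W(1), of f] REG[OF W(2), of f] by simp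
  qed
  ultimately show ?thesis unfolding affine_embedding_def top using pY_alg pD_open by blast
qed

end

lemma sqnorm_upd: "sqnorm n (\<lambda>i. (y(n := a)) i - (x(n := b)) i) = sqnorm n (\<lambda>i. y i - x i)"
  unfolding sqnorm_def by (rule sum.cong) auto

lemma sqnorm_upd1: "sqnorm n (y(n := a)) = sqnorm n y"
  unfolding sqnorm_def by (rule sum.cong) auto

lemma sqnorm_Suc: "sqnorm n z \<le> sqnorm (Suc n) z"
  unfolding sqnorm_def by simp

lemma sqnorm_nonneg: "0 \<le> sqnorm n z"
  unfolding sqnorm_def by (simp add: sum_nonneg)

lemma euclid_upd: "y \<in> euclid (Suc n) \<Longrightarrow> y(n := 0) \<in> euclid n"
  unfolding euclid_def by auto

lemma tempered_lift:
  assumes "tempered n F"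
  shows "tempered (Suc n) (\<lambda>y. F (y(n := 0)))"
proof -
  obtain D where D0: "D [] = F" and DP: "\<And>\<alpha>. set \<alpha> \<subseteq> {..<n} \<Longrightarrow>
           cont_on_euclid n (D \<alpha>) \<and>
           (\<forall>i<n. \<forall>x\<in>euclid n. ((\<lambda>t. D \<alpha> (x(i := x i + t))) has_real_derivative D (i # \<alpha>) x) (at 0)) \<and>
           (\<exists>C N. \<forall>x\<in>euclid n. \<bar>D \<alpha> x\<bar> \<le> C * (1 + sqnorm n x) ^ N)"
    using assms unfolding tempered_def by blast
  define D' where "D' \<alpha> = (if n \<in> set \<alpha> then (\<lambda>_. 0) else (\<lambda>y. D \<alpha> (y(n := 0))))" for \<alpha>
  have "cont_on_euclid (Suc n) (D' \<alpha>) \<and>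
           (\<forall>i<Suc n. \<forall>x\<in>euclid (Suc n). ((\<lambda>t. D' \<alpha> (x(i := x i + t))) has_real_derivative D' (i # \<alpha>) x) (at 0)) \<and>
           (\<exists>C N. \<forall>x\<in>euclid (Suc n). \<bar>D' \<alpha> x\<bar> \<le> C * (1 + sqnorm (Suc n) x) ^ N)"
    if \<alpha>: "set \<alpha> \<subseteq> {..<Suc n}" for \<alpha>
  proof (cases "n \<in> set \<alpha>")
    case True
    have c: "cont_on_euclid (Suc n) (D' \<alpha>)" unfolding cont_on_euclid_def D'_def using True by auto
    have "((\<lambda>t. D' \<alpha> (x(i := x i + t))) has_real_derivative D' (i # \<alpha>) x) (at 0)" for i x
      unfolding D'_def using True by simp
    moreover have "\<exists>C N. \<forall>x\<in>euclid (Suc n). \<bar>D' \<alpha> x\<bar> \<le> C * (1 + sqnorm (Suc n) x) ^ N"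
      by (rule exI[of _ 0], rule exI[of _ 0]) (simp add: D'_def True)
    ultimately show ?thesis using c by blast
  next
    case False
    then have \<alpha>n: "set \<alpha> \<subseteq> {..<n}" using \<alpha> by (auto simp: less_Suc_eq)
    note P = DP[OF \<alpha>n]
    have D'\<alpha>: "D' \<alpha> = (\<lambda>y. D \<alpha> (y(n := 0)))" unfolding D'_def using False by simp
    have c: "cont_on_euclid (Suc n) (D' \<alpha>)" unfolding cont_on_euclid_def D'\<alpha>
    proof (intro ballI allI impI)
      fix x :: "nat \<Rightarrow> real" and e :: real assume x: "x \<in> euclid (Suc n)" and e: "e > 0"
      obtain d where d: "d > 0" "\<forall>y\<in>euclid n. sqrt (sqnorm n (\<lambda>i. y i - (x(n := 0)) i)) < d \<longrightarrow>
          \<bar>D \<alpha> y - D \<alpha> (x(n := 0))\<bar> < e"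
        using P euclid_upd[OF x] e unfolding cont_on_euclid_def by blast
      show "\<exists>d>0. \<forall>y\<in>euclid (Suc n). sqrt (sqnorm (Suc n) (\<lambda>i. y i - x i)) < d \<longrightarrow>
          \<bar>D \<alpha> (y(n := 0)) - D \<alpha> (x(n := 0))\<bar> < e"
      proof (intro exI[of _ d] conjI ballI impI)
        fix y :: "nat \<Rightarrow> real" assume y: "y \<in> euclid (Suc n)" and "sqrt (sqnorm (Suc n) (\<lambda>i. y i - x i)) < d"
        moreover have "sqrt (sqnorm n (\<lambda>i. (y(n := 0)) i - (x(n := 0)) i)) \<le> sqrt (sqnorm (Suc n) (\<lambda>i. y i - x i))"
          unfolding sqnorm_upd using sqnorm_Suc by simp
        ultimately show "\<bar>D \<alpha> (y(n := 0)) - D \<alpha> (x(n := 0))\<bar> < e"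
          using d(2) euclid_upd[OF y] by fastforce
      qed (use d in simp)
    qed
    have dv: "((\<lambda>t. D' \<alpha> (x(i := x i + t))) has_real_derivative D' (i # \<alpha>) x) (at 0)"
      if i: "i < Suc n" and x: "x \<in> euclid (Suc n)" for i x
    proof (cases "i = n")
      case True
      have "(\<lambda>t. D' \<alpha> (x(i := x i + t))) = (\<lambda>t. D \<alpha> (x(n := 0)))" unfolding D'\<alpha> True by simp
      moreover have "D' (i # \<alpha>) x = 0" unfolding D'_def True by simp
      ultimately show ?thesis by simp
    next
      case False
      then have "i < n" using i by simp
      have "(\<lambda>t. D' \<alpha> (x(i := x i + t))) = (\<lambda>t. D \<alpha> ((x(n := 0))(i := (x(n := 0)) i + t)))"
        unfolding D'\<alpha> using False by (simp add: fun_upd_twist)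
      moreover have "D' (i # \<alpha>) x = D (i # \<alpha>) (x(n := 0))" unfolding D'_def using False \<open>n \<notin> set \<alpha>\<close> by simp
      moreover have "((\<lambda>t. D \<alpha> ((x(n := 0))(i := (x(n := 0)) i + t))) has_real_derivative D (i # \<alpha>) (x(n := 0))) (at 0)"
        using P \<open>i < n\<close> euclid_upd[OF x] by blast
      ultimately show ?thesis by simp
    qed
    obtain C N where CN: "\<forall>x\<in>euclid n. \<bar>D \<alpha> x\<bar> \<le> C * (1 + sqnorm n x) ^ N" using P by blast
    have "\<bar>D' \<alpha> x\<bar> \<le> \<bar>C\<bar> * (1 + sqnorm (Suc n) x) ^ N" if x: "x \<in> euclid (Suc n)" for x
    proof -
      have "\<bar>D' \<alpha> x\<bar> \<le> C * (1 + sqnorm n (x(n := 0))) ^ N" unfolding D'\<alpha> using CN euclid_upd[OF x] by simp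
      also have "\<dots> \<le> \<bar>C\<bar> * (1 + sqnorm n (x(n := 0))) ^ N"
        by (rule mult_right_mono) (auto simp: sqnorm_nonneg)
      also have "\<dots> \<le> \<bar>C\<bar> * (1 + sqnorm (Suc n) x) ^ N"
        unfolding sqnorm_upd1
        by (intro mult_left_mono power_mono) (auto simp: sqnorm_Suc sqnorm_nonneg)
      finally show ?thesis .
    qed
    then show ?thesis using c dv by blast
  qed
  moreover have "D' [] = (\<lambda>y. F (y(n := 0)))" unfolding D'_def D0 by simp
  ultimately show ?thesis unfolding tempered_def by blast
qed

lemma affine_qc:
  assumes AE: "affine_embedding T OX n Y i" and op: "\<forall>k\<in>K. openin T (W k)"
  shows "\<exists>K0\<subseteq>K. finite K0 \<and> (\<Union>k\<in>K0. W k) = (\<Union>k\<in>K. W k)"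
proof -
  note q0 = pf_const[of 0 n]
  have "\<forall>k\<in>K. \<exists>P. P \<subseteq> poly_fun n \<and> Y - i ` W k = {y \<in> Y. \<forall>p\<in>P. p y = 0}"
  proof
    fix k assume "k \<in> K"
    then have "openin T (W k)" using op by blast
    then have "zariski_open_in n Y (i ` W k)" using AE_open[OF AE q0] openin_subset by blast
    then show "\<exists>P. P \<subseteq> poly_fun n \<and> Y - i ` W k = {y \<in> Y. \<forall>p\<in>P. p y = 0}"
      unfolding zariski_open_in_def zariski_closed_in_def by blast
  qed
  then have "\<exists>PP. \<forall>k\<in>K. PP k \<subseteq> poly_fun n \<and> Y - i ` W k = {y \<in> Y. \<forall>p\<in>PP k. p y = 0}"
    by (rule bchoice)
  then obtain PP where PP0: "\<forall>k\<in>K. PP k \<subseteq> poly_fun n \<and> Y - i ` W k = {y \<in> Y. \<forall>p\<in>PP k. p y = 0}" ..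
  have PP: "\<And>k. k \<in> K \<Longrightarrow> PP k \<subseteq> poly_fun n"
    "\<And>k. k \<in> K \<Longrightarrow> Y - i ` W k = {y \<in> Y. \<forall>p\<in>PP k. p y = 0}" using PP0 by simp_all
  define Q where "Q = (\<Union>k\<in>K. PP k)"
  have "Q \<subseteq> poly_fun n" unfolding Q_def using PP(1) by blast
  then obtain Q0 where Q0: "Q0 \<subseteq> Q" "finite Q0" "\<And>x. (\<forall>q\<in>Q0. q x = 0) \<Longrightarrow> (\<forall>q\<in>Q. q x = 0)"
    using zfinite[of Q n] by blast
  have "\<forall>q\<in>Q0. \<exists>k. k \<in> K \<and> q \<in> PP k" using Q0(1) unfolding Q_def by blast
  then have "\<exists>kk. \<forall>q\<in>Q0. kk q \<in> K \<and> q \<in> PP (kk q)" by (rule bchoice)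
  then obtain kk where kk0: "\<forall>q\<in>Q0. kk q \<in> K \<and> q \<in> PP (kk q)" ..
  have kk: "\<And>q. q \<in> Q0 \<Longrightarrow> kk q \<in> K" "\<And>q. q \<in> Q0 \<Longrightarrow> q \<in> PP (kk q)" using kk0 by simp_all
  define K0 where "K0 = kk ` Q0"
  have "(\<Union>k\<in>K. W k) \<subseteq> (\<Union>k\<in>K0. W k)"
  proof
    fix x assume "x \<in> (\<Union>k\<in>K. W k)"
    then obtain k where k: "k \<in> K" "x \<in> W k" by blast
    have xT: "x \<in> topspace T" using k op openin_subset by blast
    show "x \<in> (\<Union>k\<in>K0. W k)"
    proof (rule ccontr)
      assume nx: "x \<notin> (\<Union>k\<in>K0. W k)"
      have "q (i x) = 0" if "q \<in> Q0" for q
      proof -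
        have kq: "kk q \<in> K" "x \<notin> W (kk q)" using nx that kk(1) unfolding K0_def by auto
        have WT: "W (kk q) \<subseteq> topspace T" using kq(1) op openin_subset by blast
        have "i x \<notin> i ` W (kk q)" using kq(2) WT xT i_inj[OF AE q0] by blast
        moreover have "i x \<in> Y" using i_Y[OF AE q0 xT] .
        ultimately have "i x \<in> Y - i ` W (kk q)" by blast
        then have "i x \<in> {y \<in> Y. \<forall>p\<in>PP (kk q). p y = 0}" unfolding PP(2)[OF kq(1)] .
        then show ?thesis using kk(2)[OF that] by blast
      qed
      then have "\<forall>q\<in>Q. q (i x) = 0" using Q0(3) by blast
      then have "i x \<in> {y \<in> Y. \<forall>p\<in>PP k. p y = 0}" using i_Y[OF AE q0 xT] k(1) unfolding Q_def by blast
      then have "i x \<in> Y - i ` W k" unfolding PP(2)[OF k(1)] .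
      then have "i x \<notin> i ` W k" by blast
      then show False using k(2) by blast
    qed
  qed
  moreover have "K0 \<subseteq> K" "finite K0" unfolding K0_def using kk(1) Q0(2) by auto
  ultimately show ?thesis by blast
qed

lemma affine_restrict:
  assumes AE: "affine_embedding T OX n Y i" and F: "tempered n F"
    and f: "\<forall>x\<in>topspace T. f x = F (i x)" and U: "openin T U"
  shows "\<exists>\<V>. finite \<V> \<and> \<Union>\<V> = U \<and> (\<forall>V\<in>\<V>. openin T V \<and> affine_variety (subtopology T V) OX \<and>
            tempered_affine (subtopology T V) OX (restrict f V))"
proof -
  note q0 = pf_const[of 0 n]
  have UT: "U \<subseteq> topspace T" using U openin_subset by blast
  have "zariski_open_in n Y (i ` U)" using AE_open[OF AE q0 UT] U by blast
  then obtain P where P: "P \<subseteq> poly_fun n" "Y - i ` U = {y \<in> Y. \<forall>p\<in>P. p y = 0}"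
    unfolding zariski_open_in_def zariski_closed_in_def by blast
  obtain P0 where P0: "P0 \<subseteq> P" "finite P0" "\<And>x. (\<forall>q\<in>P0. q x = 0) \<Longrightarrow> (\<forall>q\<in>P. q x = 0)"
    using zfinite[OF P(1)] by blast
  define \<V> where "\<V> = (\<lambda>q. pD T i q) ` P0"
  have Vprops: "openin T V \<and> affine_variety (subtopology T V) OX \<and> tempered_affine (subtopology T V) OX (restrict f V)"
    if V: "V \<in> \<V>" for V
  proof -
    obtain q where q: "q \<in> P0" "V = pD T i q" using V unfolding \<V>_def by blast
    have qn: "q \<in> poly_fun n" using q(1) P0(1) P(1) by blast
    note PA = principal_affine[OF AE qn]
    have "affine_variety (subtopology T V) OX" unfolding affine_variety_def q(2) using PA by blast
    moreover have "tempered_affine (subtopology T V) OX (restrict f V)"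
      unfolding tempered_affine_def
    proof (intro exI conjI)
      show "affine_embedding (subtopology T V) OX (Suc n) (pY n Y q) (pj n i q)" using PA q(2) by simp
      show "tempered (Suc n) (\<lambda>y. F (y(n := 0)))" using tempered_lift[OF F] .
      show "\<forall>x\<in>topspace (subtopology T V). restrict f V x = F ((pj n i q x)(n := 0))"
        using f pj_0[OF AE qn] by auto
    qed
    ultimately show ?thesis using PA q(2) by blast
  qed
  have "\<Union>\<V> = U"
  proof (intro equalityI subsetI)
    fix x assume "x \<in> \<Union>\<V>"
    then obtain q where q: "q \<in> P0" "x \<in> pD T i q" unfolding \<V>_def by blast
    then have xT: "x \<in> topspace T" and qx: "q (i x) \<noteq> 0" unfolding pD_def by auto
    have "q \<in> P" using q(1) P0(1) by blast
    then have "i x \<notin> {y \<in> Y. \<forall>p\<in>P. p y = 0}" using qx by blast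
    then have "i x \<notin> Y - i ` U" unfolding P(2) .
    then have "i x \<in> i ` U" using i_Y[OF AE q0 xT] by blast
    then show "x \<in> U" using i_inj[OF AE q0] xT UT by blast
  next
    fix x assume xU: "x \<in> U"
    then have xT: "x \<in> topspace T" using UT by blast
    show "x \<in> \<Union>\<V>"
    proof (rule ccontr)
      assume "x \<notin> \<Union>\<V>"
      then have "\<forall>q\<in>P0. q (i x) = 0" unfolding \<V>_def pD_def using xT by auto
      then have "\<forall>q\<in>P. q (i x) = 0" using P0(3) by blast
      then have "i x \<in> {y \<in> Y. \<forall>p\<in>P. p y = 0}" using i_Y[OF AE q0 xT] by blast
      then have "i x \<in> Y - i ` U" unfolding P(2) .
      then show False using xU by blast
    qed
  qed
  moreover have "finite \<V>" unfolding \<V>_def using P0(2) by simp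
  ultimately show ?thesis using Vprops by blast
qed

lemma variety_qc:
  assumes AV: "algebraic_variety X OX" and op: "\<forall>k\<in>K. openin X (W k)"
  shows "\<exists>K0\<subseteq>K. finite K0 \<and> (\<Union>k\<in>K0. W k) = (\<Union>k\<in>K. W k)"
proof -
  have "\<exists>\<A>. finite \<A> \<and> \<Union>\<A> = topspace X \<and> (\<forall>A\<in>\<A>. openin X A \<and> affine_variety (subtopology X A) OX)"
    using AV unfolding algebraic_variety_def by (rule conjunct2)
  then obtain \<A> where A0: "finite \<A> \<and> \<Union>\<A> = topspace X \<and> (\<forall>A\<in>\<A>. openin X A \<and> affine_variety (subtopology X A) OX)" ..
  have A: "finite \<A>" "\<Union>\<A> = topspace X"
    "\<And>A. A \<in> \<A> \<Longrightarrow> openin X A \<and> affine_variety (subtopology X A) OX"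
    using A0 by simp_all
  have "\<forall>A\<in>\<A>. \<exists>K0. K0 \<subseteq> K \<and> finite K0 \<and> (\<Union>k\<in>K0. W k \<inter> A) = (\<Union>k\<in>K. W k \<inter> A)"
  proof
    fix A assume "A \<in> \<A>"
    then obtain n Y i where AE: "affine_embedding (subtopology X A) OX n Y i"
      using A(3) unfolding affine_variety_def by blast
    have "\<forall>k\<in>K. openin (subtopology X A) (W k \<inter> A)" using op openin_subtopology_Int by blast
    from affine_qc[OF AE this] show "\<exists>K0. K0 \<subseteq> K \<and> finite K0 \<and> (\<Union>k\<in>K0. W k \<inter> A) = (\<Union>k\<in>K. W k \<inter> A)"
      by blast
  qed
  then have "\<exists>KK. \<forall>A\<in>\<A>. KK A \<subseteq> K \<and> finite (KK A) \<and> (\<Union>k\<in>KK A. W k \<inter> A) = (\<Union>k\<in>K. W k \<inter> A)"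
    by (rule bchoice)
  then obtain KK where KK0: "\<forall>A\<in>\<A>. KK A \<subseteq> K \<and> finite (KK A) \<and> (\<Union>k\<in>KK A. W k \<inter> A) = (\<Union>k\<in>K. W k \<inter> A)" ..
  have KK: "\<And>A. A \<in> \<A> \<Longrightarrow> KK A \<subseteq> K" "\<And>A. A \<in> \<A> \<Longrightarrow> finite (KK A)"
    "\<And>A. A \<in> \<A> \<Longrightarrow> (\<Union>k\<in>KK A. W k \<inter> A) = (\<Union>k\<in>K. W k \<inter> A)"
    using KK0 by simp_all
  define K0 where "K0 = (\<Union>A\<in>\<A>. KK A)"
  have "K0 \<subseteq> K" unfolding K0_def using KK(1) by blast
  moreover have "finite K0" unfolding K0_def by (intro finite_UN_I A(1) KK(2))
  moreover have "(\<Union>k\<in>K. W k) \<subseteq> (\<Union>k\<in>K0. W k)"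
  proof
    fix x assume "x \<in> (\<Union>k\<in>K. W k)"
    then obtain k where k: "k \<in> K" "x \<in> W k" by blast
    then have "x \<in> topspace X" using op openin_subset by blast
    then obtain A where Ax: "A \<in> \<A>" "x \<in> A" using A(2) by blast
    then have "x \<in> (\<Union>k\<in>K. W k \<inter> A)" using k by blast
    then have "x \<in> (\<Union>k\<in>KK A. W k \<inter> A)" unfolding KK(3)[OF Ax(1)] .
    then show "x \<in> (\<Union>k\<in>K0. W k)" unfolding K0_def using Ax(1) by blast
  qed
  ultimately show ?thesis by blast
qed

lemma tf_unfold:
  assumes U: "openin X U"
  shows "t \<in> tempered_fns (subtopology X U) OX \<longleftrightarrow> t \<in> extensional U \<and>
    (\<exists>\<U>. finite \<U> \<and> \<Union>\<U> = U \<and> (\<forall>W\<in>\<U>. openin X W \<and> W \<subseteq> U \<and> affine_variety (subtopology X W) OX \<and>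
        tempered_affine (subtopology X W) OX (restrict t W)))"
proof -
  have top: "topspace (subtopology X U) = U" using openin_subset[OF U] by (simp add: Int_absorb1)
  have e: "(openin (subtopology X U) W \<and> affine_variety (subtopology (subtopology X U) W) OX \<and>
      tempered_affine (subtopology (subtopology X U) W) OX (restrict t W)) \<longleftrightarrow>
     (openin X W \<and> W \<subseteq> U \<and> affine_variety (subtopology X W) OX \<and> tempered_affine (subtopology X W) OX (restrict t W))"
    for W
  proof (cases "W \<subseteq> U")
    case True
    then have "subtopology (subtopology X U) W = subtopology X W"
      by (simp add: subtopology_subtopology inf.absorb2)
    then show ?thesis using openin_open_subtopology[OF U] True by simp
  next
    case False
    then show ?thesis using openin_open_subtopology[OF U] by blast
  qed
  show ?thesis unfolding tempered_fns_def top mem_Collect_eq using e by simp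
qed

lemma L1: "\<forall>U. openin X U \<longrightarrow> tempered_fns (subtopology X U) OX \<subseteq> extensional U"
  using tf_unfold by blast

lemma L2:
  "\<forall>U V f. openin X U \<and> openin X V \<and> U \<subseteq> V \<and> f \<in> tempered_fns (subtopology X V) OX \<longrightarrow>
     restrict f U \<in> tempered_fns (subtopology X U) OX"
proof (intro allI impI, elim conjE)
  fix U V f assume U: "openin X U" and V: "openin X V" and UV: "U \<subseteq> V"
    and f: "f \<in> tempered_fns (subtopology X V) OX"
  have "\<exists>\<U>. finite \<U> \<and> \<Union>\<U> = V \<and> (\<forall>W\<in>\<U>. openin X W \<and> W \<subseteq> V \<and>
     affine_variety (subtopology X W) OX \<and> tempered_affine (subtopology X W) OX (restrict f W))"
    using f unfolding tf_unfold[OF V] by (rule conjunct2)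
  then obtain \<U> where \<U>0: "finite \<U> \<and> \<Union>\<U> = V \<and> (\<forall>W\<in>\<U>. openin X W \<and> W \<subseteq> V \<and>
     affine_variety (subtopology X W) OX \<and> tempered_affine (subtopology X W) OX (restrict f W))" ..
  have \<U>: "finite \<U>" "\<Union>\<U> = V" "\<And>W. W \<in> \<U> \<Longrightarrow> openin X W \<and> W \<subseteq> V \<and>
     affine_variety (subtopology X W) OX \<and> tempered_affine (subtopology X W) OX (restrict f W)"
    using conjunct1[OF \<U>0] conjunct1[OF conjunct2[OF \<U>0]] conjunct2[OF conjunct2[OF \<U>0]] by blast+
  have "\<forall>W\<in>\<U>. \<exists>\<V>. finite \<V> \<and> \<Union>\<V> = W \<inter> U \<and> (\<forall>V'\<in>\<V>. openin X V' \<and> V' \<subseteq> U \<and>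
      affine_variety (subtopology X V') OX \<and> tempered_affine (subtopology X V') OX (restrict f V'))"
  proof
    fix W assume W: "W \<in> \<U>"
    note WP = \<U>(3)[OF W]
    obtain n Y i F where AE: "affine_embedding (subtopology X W) OX n Y i" and F: "tempered n F"
      and fF: "\<forall>x\<in>topspace (subtopology X W). restrict f W x = F (i x)"
      using WP unfolding tempered_affine_def by blast
    have "openin (subtopology X W) (W \<inter> U)" using openin_subtopology_Int2[OF U] .
    from affine_restrict[OF AE F fF this] obtain \<V> where \<V>0: "finite \<V> \<and> \<Union>\<V> = W \<inter> U \<and>
      (\<forall>V'\<in>\<V>. openin (subtopology X W) V' \<and> affine_variety (subtopology (subtopology X W) V') OX \<and>
            tempered_affine (subtopology (subtopology X W) V') OX (restrict (restrict f W) V'))"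
      ..
    have \<V>: "finite \<V>" "\<Union>\<V> = W \<inter> U"
      "\<And>V'. V' \<in> \<V> \<Longrightarrow> openin (subtopology X W) V' \<and> affine_variety (subtopology (subtopology X W) V') OX \<and>
            tempered_affine (subtopology (subtopology X W) V') OX (restrict (restrict f W) V')"
      using conjunct1[OF \<V>0] conjunct1[OF conjunct2[OF \<V>0]] conjunct2[OF conjunct2[OF \<V>0]] by blast+
    have "openin X V' \<and> V' \<subseteq> U \<and> affine_variety (subtopology X V') OX \<and>
        tempered_affine (subtopology X V') OX (restrict f V')" if V': "V' \<in> \<V>" for V'
    proof -
      have sub: "V' \<subseteq> W \<inter> U" using \<V>(2) V' by blast
      have eq: "subtopology (subtopology X W) V' = subtopology X V'"
        using sub by (simp add: subtopology_subtopology Int_absorb1)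
      have req: "restrict (restrict f W) V' = restrict f V'" using sub by (simp add: Int_absorb1)
      have "openin X V'" using \<V>(3)[OF V'] openin_trans_full WP by blast
      then show ?thesis using \<V>(3)[OF V'] sub unfolding eq req by blast
    qed
    then show "\<exists>\<V>. finite \<V> \<and> \<Union>\<V> = W \<inter> U \<and> (\<forall>V'\<in>\<V>. openin X V' \<and> V' \<subseteq> U \<and>
      affine_variety (subtopology X V') OX \<and> tempered_affine (subtopology X V') OX (restrict f V'))"
      by (intro exI[of _ \<V>] conjI \<V>(1,2) ballI) (blast+)
  qed
  then have "\<exists>VV. \<forall>W\<in>\<U>. finite (VV W) \<and> \<Union>(VV W) = W \<inter> U \<and> (\<forall>V'\<in>VV W. openin X V' \<and> V' \<subseteq> U \<and>
      affine_variety (subtopology X V') OX \<and> tempered_affine (subtopology X V') OX (restrict f V'))"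
    by (rule bchoice)
  then obtain VV where VV0: "\<forall>W\<in>\<U>. finite (VV W) \<and> \<Union>(VV W) = W \<inter> U \<and> (\<forall>V'\<in>VV W. openin X V' \<and> V' \<subseteq> U \<and>
      affine_variety (subtopology X V') OX \<and> tempered_affine (subtopology X V') OX (restrict f V'))" ..
  have VV1: "\<And>W. W \<in> \<U> \<Longrightarrow> finite (VV W)" and VV2: "\<And>W. W \<in> \<U> \<Longrightarrow> \<Union>(VV W) = W \<inter> U"
    and VV3: "\<And>W V'. W \<in> \<U> \<Longrightarrow> V' \<in> VV W \<Longrightarrow> openin X V' \<and> V' \<subseteq> U \<and>
      affine_variety (subtopology X V') OX \<and> tempered_affine (subtopology X V') OX (restrict f V')"
    using VV0 by blast+
  define \<V> where "\<V> = (\<Union>W\<in>\<U>. VV W)"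
  have fin: "finite \<V>" unfolding \<V>_def by (intro finite_UN_I \<U>(1) VV1)
  have un: "\<Union>\<V> = U"
  proof -
    have "\<Union>\<V> = (\<Union>W\<in>\<U>. \<Union>(VV W))" unfolding \<V>_def by blast
    also have "\<dots> = (\<Union>W\<in>\<U>. W \<inter> U)" using VV2 by simp
    also have "\<dots> = U" using \<U>(2) UV by blast
    finally show ?thesis .
  qed
  have props: "openin X V' \<and> V' \<subseteq> U \<and> affine_variety (subtopology X V') OX \<and>
      tempered_affine (subtopology X V') OX (restrict (restrict f U) V')" if V'in: "V' \<in> \<V>" for V'
  proof -
    obtain W where "W \<in> \<U>" "V' \<in> VV W" using V'in unfolding \<V>_def by blast
    note P = VV3[OF this]
    then have "restrict (restrict f U) V' = restrict f V'" by (simp add: Int_absorb1)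
    then show ?thesis using P by simp
  qed
  show "restrict f U \<in> tempered_fns (subtopology X U) OX"
    unfolding tf_unfold[OF U]
    by (intro conjI restrict_extensional exI[of _ \<V>] fin un ballI props)
qed

lemma L3:
  "\<forall>V \<U> f g. openin X V \<and> (\<forall>U\<in>\<U>. openin X U) \<and> \<Union>\<U> = V \<and> f \<in> tempered_fns (subtopology X V) OX \<and>
      g \<in> tempered_fns (subtopology X V) OX \<and> (\<forall>U\<in>\<U>. restrict f U = restrict g U) \<longrightarrow> f = g"
proof (intro allI impI, elim conjE)
  fix V \<U> f g
  assume V: "openin X V" and un: "\<Union>\<U> = V" and f: "f \<in> tempered_fns (subtopology X V) OX"
    and g: "g \<in> tempered_fns (subtopology X V) OX" and eq: "\<forall>U\<in>\<U>. restrict f U = restrict g U"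
  have fe: "f \<in> extensional V" and ge: "g \<in> extensional V" using f g tf_unfold[OF V] by blast+
  show "f = g"
  proof (rule extensionalityI[OF fe ge])
    fix x assume "x \<in> V"
    then obtain U where U: "U \<in> \<U>" "x \<in> U" using un by blast
    then have "restrict f U x = restrict g U x" using eq by simp
    then show "f x = g x" using U by simp
  qed
qed

lemma L4:
  assumes AV: "algebraic_variety X OX"
  shows "\<forall>V \<U> s. openin X V \<and> (\<forall>U\<in>\<U>. openin X U) \<and> \<Union>\<U> = V \<and> (\<forall>U\<in>\<U>. s U \<in> tempered_fns (subtopology X U) OX) \<and>
        (\<forall>U\<in>\<U>. \<forall>U'\<in>\<U>. restrict (s U) (U \<inter> U') = restrict (s U') (U \<inter> U')) \<longrightarrow>
        (\<exists>f\<in>tempered_fns (subtopology X V) OX. \<forall>U\<in>\<U>. restrict f U = s U)"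
proof (intro allI impI, elim conjE)
  fix V \<U> s
  assume V: "openin X V" and op: "\<forall>U\<in>\<U>. openin X U" and un: "\<Union>\<U> = V"
    and sU: "\<forall>U\<in>\<U>. s U \<in> tempered_fns (subtopology X U) OX"
    and comp: "\<forall>U\<in>\<U>. \<forall>U'\<in>\<U>. restrict (s U) (U \<inter> U') = restrict (s U') (U \<inter> U')"
  define f where "f = restrict (\<lambda>x. s (SOME U. U \<in> \<U> \<and> x \<in> U) x) V"
  have fU: "restrict f U = s U" if U: "U \<in> \<U>" for U
  proof
    fix x
    show "restrict f U x = s U x"
    proof (cases "x \<in> U")
      case True
      then have xV: "x \<in> V" using un U by blast
      have "\<exists>U. U \<in> \<U> \<and> x \<in> U" using True U by blast
      then have U'0: "(SOME U. U \<in> \<U> \<and> x \<in> U) \<in> \<U> \<and> x \<in> (SOME U. U \<in> \<U> \<and> x \<in> U)" by (rule someI_ex)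
      define U' where "U' = (SOME U. U \<in> \<U> \<and> x \<in> U)"
      have U': "U' \<in> \<U>" "x \<in> U'" using U'0 unfolding U'_def by auto
      have "restrict (s U') (U' \<inter> U) = restrict (s U) (U' \<inter> U)" using comp U'(1) U by blast
      then have "restrict (s U') (U' \<inter> U) x = restrict (s U) (U' \<inter> U) x" by simp
      then have "s U' x = s U x" using U'(2) True by simp
      moreover have "f x = s U' x" unfolding f_def U'_def using xV by simp
      ultimately show ?thesis using True by simp
    next
      case False
      have "s U \<in> extensional U" using sU U op tf_unfold[of X U "s U" OX] by blast
      then show ?thesis using False by (simp add: extensional_def)
    qed
  qed
  have "\<forall>U\<in>\<U>. \<exists>\<W>. finite \<W> \<and> \<Union>\<W> = U \<and> (\<forall>W\<in>\<W>. openin X W \<and> W \<subseteq> U \<and> affine_variety (subtopology X W) OX \<and>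
        tempered_affine (subtopology X W) OX (restrict (s U) W))"
  proof
    fix U assume "U \<in> \<U>"
    then have oU: "openin X U" and sUU: "s U \<in> tempered_fns (subtopology X U) OX" using op sU by auto
    from sUU show "\<exists>\<W>. finite \<W> \<and> \<Union>\<W> = U \<and> (\<forall>W\<in>\<W>. openin X W \<and> W \<subseteq> U \<and> affine_variety (subtopology X W) OX \<and>
        tempered_affine (subtopology X W) OX (restrict (s U) W))"
      unfolding tf_unfold[OF oU] by (rule conjunct2)
  qed
  then have "\<exists>WW. \<forall>U\<in>\<U>. finite (WW U) \<and> \<Union>(WW U) = U \<and> (\<forall>W\<in>WW U. openin X W \<and> W \<subseteq> U \<and> affine_variety (subtopology X W) OX \<and>
        tempered_affine (subtopology X W) OX (restrict (s U) W))" by (rule bchoice)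
  then obtain WW where WW0: "\<forall>U\<in>\<U>. finite (WW U) \<and> \<Union>(WW U) = U \<and> (\<forall>W\<in>WW U. openin X W \<and> W \<subseteq> U \<and> affine_variety (subtopology X W) OX \<and>
        tempered_affine (subtopology X W) OX (restrict (s U) W))" ..
  have WW2: "\<And>U. U \<in> \<U> \<Longrightarrow> \<Union>(WW U) = U"
    and WW3: "\<And>U W. U \<in> \<U> \<Longrightarrow> W \<in> WW U \<Longrightarrow> openin X W \<and> W \<subseteq> U \<and> affine_variety (subtopology X W) OX \<and>
        tempered_affine (subtopology X W) OX (restrict (s U) W)"
    using WW0 by blast+
  define K where "K = (\<Union>U\<in>\<U>. WW U)"
  have "\<forall>k\<in>K. openin X k" unfolding K_def using WW3 by blast
  from variety_qc[OF AV this] obtain K0 where K00: "K0 \<subseteq> K \<and> finite K0 \<and> (\<Union>k\<in>K0. k) = (\<Union>k\<in>K. k)"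
    by (elim exE conjE) (intro that conjI)
  have K0: "K0 \<subseteq> K" "finite K0" "(\<Union>k\<in>K0. k) = (\<Union>k\<in>K. k)"
    using conjunct1[OF K00] conjunct1[OF conjunct2[OF K00]] conjunct2[OF conjunct2[OF K00]] by blast+
  have "(\<Union>k\<in>K. k) = (\<Union>U\<in>\<U>. \<Union>(WW U))" unfolding K_def by blast
  also have "\<dots> = V" using WW2 un by simp
  finally have unK0: "\<Union>K0 = V" using K0(3) by simp
  have props: "openin X W \<and> W \<subseteq> V \<and> affine_variety (subtopology X W) OX \<and>
      tempered_affine (subtopology X W) OX (restrict f W)" if Win: "W \<in> K0" for W
  proof -
    obtain U where U: "U \<in> \<U>" "W \<in> WW U" using Win K0(1) unfolding K_def by blast
    note P = WW3[OF U]
    have "restrict f W = restrict (restrict f U) W" using P by (simp add: Int_absorb1)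
    also have "\<dots> = restrict (s U) W" using fU[OF U(1)] by simp
    finally have "restrict f W = restrict (s U) W" .
    moreover have "W \<subseteq> V" using P U(1) un by blast
    ultimately show ?thesis using P by simp
  qed
  have "f \<in> tempered_fns (subtopology X V) OX"
    unfolding tf_unfold[OF V]
    by (intro conjI exI[of _ K0] K0(2) unK0 ballI props) (simp add: f_def)
  then show "\<exists>f\<in>tempered_fns (subtopology X V) OX. \<forall>U\<in>\<U>. restrict f U = s U"
    using fU by (intro bexI[of _ f] ballI)
qed

theorem proposition5p11:
  fixes X :: "'a topology" and OX :: "'a set \<Rightarrow> ('a \<Rightarrow> real) set"
  assumes "algebraic_variety X OX"
  shows "sheaf_fun X (\<lambda>U. tempered_fns (subtopology X U) OX)"
  unfolding sheaf_fun_def by (intro conjI L1 L2 L3 L4[OF assms])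

end
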